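(* As formal power series, $$\sum_{M\geq1}g(M)x^M=\frac{x-x^3}{(1-x-x^2)^2},\qquad \sum_{M\geq1}h(M)x^M=\frac{x-x^2}{(1-x-x^2)^2},$$ $$\sum_{M\geq1}g_1(M)x^M=\frac{x^2}{(1-x-x^2)^2}=\sum_{M\geq1}h_1(M)x^M.$$ In particular $g_1(M)=h_1(M)$ for all $M\geq1$.
   Context: The perimeter of a nonempty partition $\lambda$ with largest part $\lambda_1$ and $\ell(\lambda)$ parts is $\lambda_1+\ell(\lambda)-1$. $\mathcal G(M)$ is the set of partitions into odd parts with perimeter $M$, $\mathcal H(M)$ the set of partitions into distinct parts with perimeter $M$; $g(M)$ (resp. $h(M)$) is the total number of parts, summed over all partitions in $\mathcal G(M)$ (resp. $\mathcal H(M)$). $\mathcal G_1(M)$ is the set of partitions with perimeter $M$ in which exactly one distinct even integer occurs as a part (possibly with multiplicity greater than one) and all other parts are odd; $\mathcal H_1(M)$ is the set of partitions with perimeter $M$ in which exactly one part value occurs at least twice and every other part value occurs exactly once. $g_1(M)=|\mathcal G_1(M)|$, $h_1(M)=|\mathcal H_1(M)|$. *)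

theory Defs
  imports "HOL-Library.Multiset" "HOL-Computational_Algebra.Formal_Power_Series"
begin

definition is_partition :: "nat multiset \<Rightarrow> bool" where
  "is_partition p \<longleftrightarrow> (\<forall>x \<in># p. 0 < x)"

definition perimeter :: "nat multiset \<Rightarrow> nat" where
  "perimeter p = Max (set_mset p) + size p - 1"

definition partitions_perim :: "nat \<Rightarrow> nat multiset set" where
  "partitions_perim M = {p. is_partition p \<and> p \<noteq> {#} \<and> perimeter p = M}"

definition G_set :: "nat \<Rightarrow> nat multiset set" where
  "G_set M = {p \<in> partitions_perim M. \<forall>x \<in># p. odd x}"

definition H_set :: "nat \<Rightarrow> nat multiset set" where
  "H_set M = {p \<in> partitions_perim M. \<forall>x \<in># p. count p x = 1}"

definition g :: "nat \<Rightarrow> nat" where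
  "g M = (\<Sum>p \<in> G_set M. size p)"

definition h :: "nat \<Rightarrow> nat" where
  "h M = (\<Sum>p \<in> H_set M. size p)"

definition G1_set :: "nat \<Rightarrow> nat multiset set" where
  "G1_set M = {p \<in> partitions_perim M. card {x \<in> set_mset p. even x} = 1}"

definition H1_set :: "nat \<Rightarrow> nat multiset set" where
  "H1_set M = {p \<in> partitions_perim M. card {x \<in> set_mset p. 2 \<le> count p x} = 1}"

definition g1 :: "nat \<Rightarrow> nat" where "g1 M = card (G1_set M)"
definition h1 :: "nat \<Rightarrow> nat" where "h1 M = card (H1_set M)"

end

theory Submission
  imports Defs
begin

unbundle fps_syntax

definition ssum :: "(nat \<Rightarrow> rat fps) \<Rightarrow> rat fps" where
  "ssum V = Abs_fps (\<lambda>n. \<Sum>m\<le>n. V m $ n)"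

definition ord_ok :: "(nat \<Rightarrow> rat fps) \<Rightarrow> bool" where
  "ord_ok V \<longleftrightarrow> (\<forall>m n. n < m \<longrightarrow> V m $ n = 0)"

lemma ssum_nth: "ssum V $ n = (\<Sum>m\<le>n. V m $ n)"
  by (simp add: ssum_def)

lemma ssum_add: "ssum (\<lambda>j. V j + W j) = ssum V + ssum W"
  by (simp add: fps_eq_iff ssum_nth sum.distrib)

lemma ssum_diff: "ssum (\<lambda>j. V j - W j) = ssum V - ssum W"
  by (simp add: fps_eq_iff ssum_nth sum_subtractf)

lemma ssum_mult:
  assumes "ord_ok V"
  shows "c * ssum V = ssum (\<lambda>j. c * V j)"
proof (rule fps_ext)
  fix n
  have "(c * ssum V) $ n = (\<Sum>i=0..n. c$i * (\<Sum>m\<le>n - i. V m $ (n - i)))"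
    by (simp add: fps_mult_nth ssum_nth)
  also have "\<dots> = (\<Sum>i=0..n. c$i * (\<Sum>m\<le>n. V m $ (n - i)))"
  proof (rule sum.cong[OF refl])
    fix i assume "i \<in> {0..n}"
    have "(\<Sum>m\<le>n - i. V m $ (n - i)) = (\<Sum>m\<le>n. V m $ (n - i))"
      by (rule sum.mono_neutral_left) (use assms in \<open>auto simp: ord_ok_def\<close>)
    then show "c$i * (\<Sum>m\<le>n - i. V m $ (n - i)) = c$i * (\<Sum>m\<le>n. V m $ (n - i))" by simp
  qed
  also have "\<dots> = (\<Sum>m\<le>n. \<Sum>i=0..n. c$i * V m $ (n - i))"
    by (simp add: sum_distrib_left sum.swap[where A="{0..n}"])
  also have "\<dots> = ssum (\<lambda>j. c * V j) $ n"
    by (simp add: ssum_nth fps_mult_nth)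
  finally show "(c * ssum V) $ n = ssum (\<lambda>j. c * V j) $ n" .
qed

lemma pow_ord: assumes "u $ 0 = 0" "n < m" shows "(u^m * A) $ n = 0"
proof -
  have "(u^m * A) $ n = (\<Sum>i=0..n. (u^m)$i * A$(n-i))" by (simp add: fps_mult_nth)
  also have "\<dots> = 0"
    using startsby_zero_power_prefix[OF assms(1), of m] assms(2) by (intro sum.neutral) auto
  finally show ?thesis .
qed

lemma ord_ok_pow: "u $ 0 = 0 \<Longrightarrow> ord_ok (\<lambda>j. f j * (u^j * A))"
  unfolding ord_ok_def
proof (intro allI impI)
  fix m n assume "u $ 0 = 0" "n < (m::nat)"
  have "(f m * (u^m * A)) $ n = (u^m * (f m * A)) $ n" by (simp add: algebra_simps)
  also have "\<dots> = 0" by (rule pow_ord) fact+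
  finally show "(f m * (u^m * A)) $ n = 0" .
qed

lemma ord_ok_pow': "u $ 0 = 0 \<Longrightarrow> ord_ok (\<lambda>j. u^j * A)"
  using ord_ok_pow[of u "\<lambda>_. 1" A] by simp

lemma ssum_geo:
  assumes u0: "u $ 0 = 0"
  shows "ssum (\<lambda>j. u^j * A) * (1 - u) = A"
proof -
  have "ssum (\<lambda>j. u^j * A) * (1 - u) = ssum (\<lambda>j. u^j * A) - u * ssum (\<lambda>j. u^j * A)"
    by (simp add: algebra_simps)
  also have "u * ssum (\<lambda>j. u^j * A) = ssum (\<lambda>j. u^Suc j * A)"
    by (subst ssum_mult[OF ord_ok_pow'[OF u0]]) (simp add: mult.assoc)
  also have "ssum (\<lambda>j. u^j * A) - ssum (\<lambda>j. u^Suc j * A) = A"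
  proof (rule fps_ext)
    fix n
    have "(ssum (\<lambda>j. u^j * A) - ssum (\<lambda>j. u^Suc j * A)) $ n
        = (\<Sum>m\<le>n. (u^m * A) $ n - (u^Suc m * A) $ n)"
      by (simp add: ssum_nth sum_subtractf)
    also have "\<dots> = (u^0 * A) $ n - (u^Suc n * A) $ n" by (rule sum_telescope)
    also have "\<dots> = A $ n" using pow_ord[OF u0, of n "Suc n" A] by simp
    finally show "(ssum (\<lambda>j. u^j * A) - ssum (\<lambda>j. u^Suc j * A)) $ n = A $ n" .
  qed
  finally show ?thesis .
qed

lemma ssum_geo2:
  assumes u0: "u $ 0 = 0"
  shows "ssum (\<lambda>j. of_nat (Suc j) * (u^j * A)) * (1 - u)^2 = A"
proof -
  let ?T = "ssum (\<lambda>j. of_nat (Suc j) * (u^j * A))"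
  have "?T * (1 - u) = ?T - u * ?T" by (simp add: algebra_simps)
  also have "u * ?T = ssum (\<lambda>j. of_nat (Suc j) * (u^Suc j * A))"
    by (subst ssum_mult[OF ord_ok_pow[OF u0]]) (simp add: algebra_simps)
  also have "?T - ssum (\<lambda>j. of_nat (Suc j) * (u^Suc j * A)) = ssum (\<lambda>j. u^j * A)"
  proof (rule fps_ext)
    fix n
    let ?a = "\<lambda>m. (u^m * A) $ n"
    have "(?T - ssum (\<lambda>j. of_nat (Suc j) * (u^Suc j * A))) $ n
        = (\<Sum>m\<le>n. of_nat (Suc m) * ?a m - of_nat (Suc m) * ?a (Suc m))"
      by (simp add: ssum_nth sum_subtractf fps_mult_left_const_nth flip: fps_of_nat)
    also have "\<dots> = (\<Sum>m\<le>n. ?a m + (of_nat m * ?a m - of_nat (Suc m) * ?a (Suc m)))"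
      by (rule sum.cong) (auto simp: algebra_simps)
    also have "\<dots> = (\<Sum>m\<le>n. ?a m) + (of_nat 0 * ?a 0 - of_nat (Suc n) * ?a (Suc n))"
      by (simp only: sum.distrib sum_telescope[of "\<lambda>m. of_nat m * ?a m"])
    also have "\<dots> = (\<Sum>m\<le>n. ?a m)" using pow_ord[OF u0, of n "Suc n" A] by simp
    finally show "(?T - ssum (\<lambda>j. of_nat (Suc j) * (u^Suc j * A))) $ n = ssum (\<lambda>j. u^j * A) $ n"
      by (simp add: ssum_nth)
  qed
  finally have "?T * (1 - u) = ssum (\<lambda>j. u^j * A)" .
  then have "?T * (1 - u)^2 = ssum (\<lambda>j. u^j * A) * (1 - u)" by (simp add: power2_eq_square mult.assoc)
  then show ?thesis using ssum_geo[OF u0] by simp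
qed


definition MS :: "(nat \<Rightarrow> nat set) \<Rightarrow> nat \<Rightarrow> nat multiset set" where
  "MS F m = {q. \<forall>v. count q v \<in> (if 1 \<le> v \<and> v \<le> m then F v else {0})}"

definition cnt :: "nat multiset set \<Rightarrow> nat \<Rightarrow> nat" where
  "cnt S n = card {q\<in>S. size q = n}"

definition gf :: "nat multiset set \<Rightarrow> rat fps" where
  "gf S = Abs_fps (\<lambda>n. of_nat (cnt S n))"

definition ind :: "nat set \<Rightarrow> rat fps" where
  "ind C = Abs_fps (\<lambda>c. if c \<in> C then 1 else 0)"

lemma MS_0: "MS F 0 = {{#}}"
  by (auto simp: MS_def multiset_eq_iff)

lemma MS_Suc_slice:
  "{q\<in>MS F (Suc m). size q = n} = (\<lambda>(c,q). q + replicate_mset c (Suc m)) `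
     (SIGMA c:{c. c \<le> n \<and> c \<in> F (Suc m)}. {q\<in>MS F m. size q = n - c})" (is "?L = ?R")
proof
  show "?L \<subseteq> ?R"
  proof
    fix q assume q: "q \<in> ?L"
    define c where "c = count q (Suc m)"
    define q' where "q' = filter_mset (\<lambda>x. x \<noteq> Suc m) q"
    have eq: "q = q' + replicate_mset c (Suc m)"
      by (auto simp: multiset_eq_iff q'_def c_def count_replicate_mset)
    have sz: "size q = size q' + c" by (subst eq) simp
    have "q' \<in> MS F m"
      unfolding MS_def
    proof (intro CollectI allI)
      fix v
      have cv: "count q' v = (if v = Suc m then 0 else count q v)" by (simp add: q'_def)
      have "count q v \<in> (if 1 \<le> v \<and> v \<le> Suc m then F v else {0})"
        using q by (auto simp: MS_def)
      then show "count q' v \<in> (if 1 \<le> v \<and> v \<le> m then F v else {0})"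
        unfolding cv by (auto split: if_splits)
    qed
    moreover have "c \<in> F (Suc m)" using q by (auto simp: MS_def c_def dest: spec[of _ "Suc m"])
    ultimately show "q \<in> ?R" using q sz eq
      by (intro image_eqI[of _ _ "(c, q')"]) auto
  qed
next
  show "?R \<subseteq> ?L"
  proof
    fix x assume "x \<in> ?R"
    then obtain c q where x: "x = q + replicate_mset c (Suc m)" and c: "c \<le> n" "c \<in> F (Suc m)"
      and q: "q \<in> MS F m" "size q = n - c" by auto
    have "x \<in> MS F (Suc m)"
      unfolding MS_def
    proof (intro CollectI allI)
      fix v
      have cq: "count q v \<in> (if 1 \<le> v \<and> v \<le> m then F v else {0})"
        using q(1) unfolding MS_def by blast
      have cx: "count x v = count q v + (if v = Suc m then c else 0)"
        by (simp add: x count_replicate_mset)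
      show "count x v \<in> (if 1 \<le> v \<and> v \<le> Suc m then F v else {0})"
      proof (cases "v = Suc m")
        case True
        then have "count q v = 0" using cq by simp
        then show ?thesis using True c cx by simp
      next
        case False
        then show ?thesis using cq cx by (auto split: if_splits)
      qed
    qed
    then show "x \<in> ?L" using x q c by auto
  qed
qed

lemma MS_Suc_inj:
  "inj_on (\<lambda>(c,q). q + replicate_mset c (Suc m))
     (SIGMA c:{c. c \<le> n \<and> c \<in> F (Suc m)}. {q\<in>MS F m. size q = n - c})"
proof (rule inj_onI, clarify)
  fix c q c' q'
  assume q: "q \<in> MS F m" and q': "q' \<in> MS F m"
    and eq: "q + replicate_mset c (Suc m) = q' + replicate_mset c' (Suc m)"
  have z: "count q (Suc m) = 0" "count q' (Suc m) = 0"
    using q q' by (auto simp: MS_def dest!: spec[of _ "Suc m"])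
  from arg_cong[OF eq, of "\<lambda>x. count x (Suc m)"] z have "c = c'" by simp
  with eq show "c = c' \<and> q = q'" by simp
qed

lemma MS_main:
  "finite {q\<in>MS F m. size q = n} \<and> gf (MS F m) = (\<Prod>v\<in>{1..m}. ind (F v))"
proof (induction m arbitrary: n)
  case 0
  have "{q\<in>MS F 0. size q = n} = (if n = 0 then {{#}} else {})" by (auto simp: MS_0)
  moreover have "gf (MS F 0) = 1"
    by (auto simp: fps_eq_iff gf_def cnt_def MS_0)
  ultimately show ?case by simp
next
  case (Suc m)
  let ?A = "\<lambda>n. SIGMA c:{c. c \<le> n \<and> c \<in> F (Suc m)}. {q\<in>MS F m. size q = n - c}"
  have fin: "finite (?A n)" for n
    using Suc.IH by (intro finite_SigmaI) auto
  have card: "cnt (MS F (Suc m)) n = (\<Sum>c\<in>{c. c \<le> n \<and> c \<in> F (Suc m)}. cnt (MS F m) (n - c))" for n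
  proof -
    have "cnt (MS F (Suc m)) n = card (?A n)"
      unfolding cnt_def MS_Suc_slice by (rule card_image[OF MS_Suc_inj])
    also have "\<dots> = (\<Sum>c\<in>{c. c \<le> n \<and> c \<in> F (Suc m)}. cnt (MS F m) (n - c))"
      by (subst card_SigmaI) (auto simp: cnt_def Suc.IH)
    finally show ?thesis .
  qed
  have "gf (MS F (Suc m)) = ind (F (Suc m)) * gf (MS F m)"
  proof (rule fps_ext)
    fix n
    have "(ind (F (Suc m)) * gf (MS F m)) $ n
       = (\<Sum>i=0..n. (if i \<in> F (Suc m) then 1 else 0) * of_nat (cnt (MS F m) (n - i)))"
      by (simp add: fps_mult_nth ind_def gf_def)
    also have "\<dots> = (\<Sum>i\<in>{i\<in>{0..n}. i \<in> F (Suc m)}. of_nat (cnt (MS F m) (n - i)))"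
      by (subst sum.inter_filter) (auto intro!: sum.cong)
    also have "{i\<in>{0..n}. i \<in> F (Suc m)} = {c. c \<le> n \<and> c \<in> F (Suc m)}" by auto
    finally have C: "(ind (F (Suc m)) * gf (MS F m)) $ n = (\<Sum>c\<in>{c. c \<le> n \<and> c \<in> F (Suc m)}. of_nat (cnt (MS F m) (n - c)))" .
    have D: "gf (MS F (Suc m)) $ n = (\<Sum>c\<in>{c. c \<le> n \<and> c \<in> F (Suc m)}. of_nat (cnt (MS F m) (n - c)))"
      by (simp add: gf_def card)
    show "gf (MS F (Suc m)) $ n = (ind (F (Suc m)) * gf (MS F m)) $ n"
      unfolding C D ..
  qed
  then have "gf (MS F (Suc m)) = (\<Prod>v\<in>{1..Suc m}. ind (F v))"
    using Suc.IH by (simp add: prod.nat_ivl_Suc')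
  moreover have "finite {q\<in>MS F (Suc m). size q = n}"
    unfolding MS_Suc_slice using fin by simp
  ultimately show ?case by simp
qed


definition Q :: "(nat multiset \<Rightarrow> bool) \<Rightarrow> nat \<Rightarrow> nat multiset set" where
  "Q P m = {q. (\<forall>v\<in>#q. 0 < v \<and> v \<le> m) \<and> P (add_mset m q)}"

lemma fin_Q: "finite {q\<in>Q P m. size q = n}"
proof (rule finite_subset)
  show "finite {q\<in>MS (\<lambda>_. UNIV) m. size q = n}" using MS_main by blast
  show "{q\<in>Q P m. size q = n} \<subseteq> {q\<in>MS (\<lambda>_. UNIV) m. size q = n}"
  proof (safe)
    fix q assume q: "q \<in> Q P m"
    show "q \<in> MS (\<lambda>_. UNIV) m" unfolding MS_def
    proof (intro CollectI allI)
      fix v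
      show "count q v \<in> (if 1 \<le> v \<and> v \<le> m then UNIV else {0})"
      proof (cases "1 \<le> v \<and> v \<le> m")
        case False
        then have "v \<notin># q" using q by (auto simp: Q_def)
        then show ?thesis using False by (simp add: not_in_iff)
      qed simp
    qed
  qed
qed

lemma Max_add: "(\<forall>v\<in>#q. v \<le> m) \<Longrightarrow> Max (set_mset (add_mset m q)) = m"
  by (intro Max_eqI) auto

lemma decomp:
  "{p\<in>partitions_perim M. P p} = (\<Union>m\<in>{1..M}. add_mset m ` {q\<in>Q P m. size q = M - m})"
  (is "?L = ?R")
proof
  show "?L \<subseteq> ?R"
  proof
    fix p assume p: "p \<in> ?L"
    define m where "m = Max (set_mset p)"
    have ne: "p \<noteq> {#}" and pos: "\<forall>x\<in>#p. 0 < x" and per: "m + size p - 1 = M" and Pp: "P p"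
      using p by (auto simp: partitions_perim_def is_partition_def perimeter_def m_def)
    have mp: "m \<in># p" unfolding m_def using ne by (intro Max_in) auto
    define q where "q = p - {#m#}"
    have pq: "p = add_mset m q" using mp by (simp add: q_def)
    have qle: "\<forall>v\<in>#q. 0 < v \<and> v \<le> m"
    proof
      fix v assume "v \<in># q"
      then have "v \<in># p" unfolding q_def by (rule in_diffD)
      then show "0 < v \<and> v \<le> m" using pos unfolding m_def by auto
    qed
    have m1: "1 \<le> m" using pos mp by auto
    have sz: "size q = M - m" "m \<le> M" using per pq by auto
    show "p \<in> ?R" using qle Pp pq sz m1 by (auto simp: Q_def)
  qed
next
  show "?R \<subseteq> ?L"
  proof
    fix p assume "p \<in> ?R"
    then obtain m q where m: "1 \<le> m" "m \<le> M" and q: "q \<in> Q P m" "size q = M - m"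
      and p: "p = add_mset m q" by auto
    have mx: "Max (set_mset p) = m" unfolding p using q(1) by (intro Max_add) (auto simp: Q_def)
    show "p \<in> ?L" using m q mx
      by (auto simp: partitions_perim_def is_partition_def perimeter_def p Q_def)
  qed
qed

lemma sum_decomp:
  "(\<Sum>p\<in>{p\<in>partitions_perim M. P p}. (w (size p) :: nat))
     = (\<Sum>m\<in>{1..M}. w (Suc (M - m)) * cnt (Q P m) (M - m))"
proof -
  have "(\<Sum>p\<in>{p\<in>partitions_perim M. P p}. w (size p))
      = (\<Sum>m\<in>{1..M}. \<Sum>p\<in>add_mset m ` {q\<in>Q P m. size q = M - m}. w (size p))"
    unfolding decomp
  proof (rule sum.UNION_disjoint)
    show "finite {1..M}" by simp
    show "\<forall>m\<in>{1..M}. finite (add_mset m ` {q\<in>Q P m. size q = M - m})" using fin_Q by auto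
    show "\<forall>i\<in>{1..M}. \<forall>j\<in>{1..M}. i \<noteq> j \<longrightarrow>
      add_mset i ` {q\<in>Q P i. size q = M - i} \<inter> add_mset j ` {q\<in>Q P j. size q = M - j} = {}"
    proof (intro ballI impI)
      fix i j :: nat assume "i \<noteq> j"
      { fix q q' assume "q \<in> Q P i" "q' \<in> Q P j" "add_mset i q = add_mset j q'"
        then have "Max (set_mset (add_mset i q)) = i" "Max (set_mset (add_mset j q')) = j"
          by (metis (no_types, lifting) Q_def mem_Collect_eq Max_add)+
        with \<open>add_mset i q = add_mset j q'\<close> \<open>i \<noteq> j\<close> have False by simp }
      then show "add_mset i ` {q\<in>Q P i. size q = M - i} \<inter> add_mset j ` {q\<in>Q P j. size q = M - j} = {}"
        by blast
    qed
  qed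
  also have "\<dots> = (\<Sum>m\<in>{1..M}. w (Suc (M - m)) * cnt (Q P m) (M - m))"
  proof (rule sum.cong[OF refl])
    fix m
    have "(\<Sum>p\<in>add_mset m ` {q\<in>Q P m. size q = M - m}. w (size p))
        = (\<Sum>q\<in>{q\<in>Q P m. size q = M - m}. w (size (add_mset m q)))"
      by (rule sum.reindex_cong[where l="add_mset m"]) (auto simp: inj_on_def)
    also have "\<dots> = w (Suc (M - m)) * cnt (Q P m) (M - m)"
      by (simp add: cnt_def)
    finally show "(\<Sum>p\<in>add_mset m ` {q\<in>Q P m. size q = M - m}. w (size p)) = w (Suc (M - m)) * cnt (Q P m) (M - m)" .
  qed
  finally show ?thesis .
qed

lemma card_decomp:
  "card {p\<in>partitions_perim M. P p} = (\<Sum>m\<in>{1..M}. cnt (Q P m) (M - m))"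
  using sum_decomp[where M=M and P=P and w="\<lambda>_. 1"] by simp

lemma size_decomp:
  "(\<Sum>p\<in>{p\<in>partitions_perim M. P p}. size p) = (\<Sum>m\<in>{1..M}. Suc (M - m) * cnt (Q P m) (M - m))"
  using sum_decomp[where M=M and P=P and w="\<lambda>x. x"] by simp

lemma coeff_card:
  "(of_nat (card {p\<in>partitions_perim M. P p}) :: rat) = (\<Sum>m\<in>{1..M}. (fps_X^m * gf (Q P m)) $ M)"
  unfolding card_decomp by (simp add: fps_X_power_mult_nth gf_def)

lemma coeff_size:
  "(of_nat (\<Sum>p\<in>{p\<in>partitions_perim M. P p}. size p) :: rat)
     = (\<Sum>m\<in>{1..M}. (fps_X^m * (gf (Q P m) + fps_X * fps_deriv (gf (Q P m)))) $ M)"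
  unfolding size_decomp of_nat_sum
proof (rule sum.cong[OF refl])
  fix m assume "m \<in> {1..M}"
  then have "m \<le> M" by simp
  show "of_nat (Suc (M - m) * cnt (Q P m) (M - m))
     = (fps_X^m * (gf (Q P m) + fps_X * fps_deriv (gf (Q P m)))) $ M"
  proof -
    obtain n where M: "M = m + n" using \<open>m \<le> M\<close> le_Suc_ex by blast
    show ?thesis unfolding M
      by (cases n) (auto simp: fps_X_power_mult_nth gf_def algebra_simps)
  qed
qed


definition ones :: "rat fps" where "ones = Abs_fps (\<lambda>_. 1)"

lemma MS_alt: "MS F m = {q. (\<forall>v\<in>#q. 1 \<le> v \<and> v \<le> m) \<and> (\<forall>v\<in>{1..m}. count q v \<in> F v)}"
proof (intro set_eqI iffI)
  fix q assume q: "q \<in> MS F m"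
  then have c: "\<And>v. count q v \<in> (if 1 \<le> v \<and> v \<le> m then F v else {0})"
    by (simp add: MS_def)
  have "\<forall>v\<in>#q. 1 \<le> v \<and> v \<le> m"
  proof
    fix v assume "v \<in># q"
    then have "count q v \<noteq> 0" by simp
    then show "1 \<le> v \<and> v \<le> m" using c[of v] by (metis singletonD)
  qed
  moreover have "\<forall>v\<in>{1..m}. count q v \<in> F v"
  proof
    fix v assume "v \<in> {1..m}"
    then show "count q v \<in> F v" using c[of v] by simp
  qed
  ultimately show "q \<in> {q. (\<forall>v\<in>#q. 1 \<le> v \<and> v \<le> m) \<and> (\<forall>v\<in>{1..m}. count q v \<in> F v)}"
    by blast
next
  fix q assume q: "q \<in> {q. (\<forall>v\<in>#q. 1 \<le> v \<and> v \<le> m) \<and> (\<forall>v\<in>{1..m}. count q v \<in> F v)}"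
  show "q \<in> MS F m" unfolding MS_def
  proof (intro CollectI allI)
    fix v
    show "count q v \<in> (if 1 \<le> v \<and> v \<le> m then F v else {0})"
    proof (cases "1 \<le> v \<and> v \<le> m")
      case True then show ?thesis using q by auto
    next
      case False
      then have "v \<notin># q" using q by auto
      then have "count q v = 0" by (simp add: not_in_iff)
      then show ?thesis using False by (simp only: if_False) simp
    qed
  qed
qed

lemma gf_UN:
  assumes "finite I" "\<And>i j. i \<in> I \<Longrightarrow> j \<in> I \<Longrightarrow> i \<noteq> j \<Longrightarrow> S i \<inter> S j = {}"
    "\<And>i n. i \<in> I \<Longrightarrow> finite {q\<in>S i. size q = n}"
  shows "gf (\<Union>i\<in>I. S i) = (\<Sum>i\<in>I. gf (S i))"
proof (rule fps_ext)
  fix n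
  have "{q\<in>(\<Union>i\<in>I. S i). size q = n} = (\<Union>i\<in>I. {q\<in>S i. size q = n})" by auto
  then have "cnt (\<Union>i\<in>I. S i) n = card (\<Union>i\<in>I. {q\<in>S i. size q = n})" by (simp add: cnt_def)
  also have "\<dots> = (\<Sum>i\<in>I. cnt (S i) n)"
    unfolding cnt_def using assms by (subst card_UN_disjoint) auto
  finally show "gf (\<Union>i\<in>I. S i) $ n = (\<Sum>i\<in>I. gf (S i)) $ n"
    by (simp add: gf_def fps_sum_nth)
qed

lemma ind_UNIV: "ind UNIV = ones" by (simp add: ind_def ones_def)
lemma ind_0: "ind {0} = 1" by (auto simp: ind_def fps_eq_iff)
lemma ind_01: "ind {0,1} = 1 + fps_X" by (auto simp: ind_def fps_eq_iff fps_X_def)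
lemma ind_ge1: "ind {c. 1 \<le> c} = fps_X * ones" by (auto simp: ind_def fps_eq_iff ones_def)
lemma ind_ge2: "ind {c. 2 \<le> c} = fps_X^2 * ones"
  by (auto simp: ind_def fps_eq_iff ones_def fps_X_power_mult_nth)

lemma PO: "(\<Prod>v\<in>{1..m}. if odd v then a else (1::rat fps)) = a ^ ((m + 1) div 2)"
proof (induction m)
  case 0 then show ?case by simp
next
  case (Suc m)
  show ?case
  proof (cases "odd (Suc m)")
    case True
    then have e: "(Suc m + 1) div 2 = Suc ((m + 1) div 2)" by presburger
    show ?thesis using True by (simp only: prod.nat_ivl_Suc' Suc.IH e) simp
  next
    case False
    then have e: "(Suc m + 1) div 2 = (m + 1) div 2" by presburger
    show ?thesis using False by (simp only: prod.nat_ivl_Suc' Suc.IH e) simp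
  qed
qed

lemma Pconst: "(\<Prod>v\<in>{1..m}. (c::rat fps)) = c ^ m" by simp


lemma ones_deriv: "fps_deriv ones = ones^2"
  by (simp add: fps_eq_iff ones_def power2_eq_square fps_mult_nth)

lemma ones_inv: "ones * (1 - fps_X) = 1"
proof -
  have "ones * (1 - fps_X) = ones - fps_X * ones" by (simp add: algebra_simps)
  then show ?thesis by (simp add: fps_eq_iff ones_def)
qed

lemma X_ord: "M < m \<Longrightarrow> (fps_X^m * (A::rat fps)) $ M = 0"
  by (simp add: fps_X_power_mult_nth)

lemma shift1:
  "(\<Sum>m\<in>{1..M}. (fps_X^m * A m) $ M) = ssum (\<lambda>j. fps_X^(Suc j) * A (Suc j)) $ M"
proof -
  have "ssum (\<lambda>j. fps_X^(Suc j) * A (Suc j)) $ M = (\<Sum>j\<in>{0..M}. (fps_X^(Suc j) * A (Suc j)) $ M)"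
    by (simp add: ssum_nth atLeast0AtMost)
  also have "\<dots> = (\<Sum>m\<in>{Suc 0..Suc M}. (fps_X^m * A m) $ M)"
    by (rule sum.shift_bounds_cl_Suc_ivl[symmetric])
  also have "\<dots> = (\<Sum>m\<in>{1..M}. (fps_X^m * A m) $ M)"
  proof -
    have z: "(fps_X^(Suc M) * A (Suc M)) $ M = 0" by (rule X_ord) simp
    show ?thesis by (simp only: sum.cl_ivl_Suc z) simp
  qed
  finally show ?thesis by simp
qed

lemma pair_sum: "(\<Sum>k<(N::nat). (f (2*k) + f (2*k+1)) :: 'a::comm_monoid_add) = (\<Sum>m<2*N. f m)"
  by (induction N) (simp_all add: algebra_simps)

lemma pair2:
  "(\<Sum>m\<in>{1..M}. (fps_X^m * A m) $ M)
     = ssum (\<lambda>k. fps_X^(2*k+1) * A (2*k+1) + fps_X^(2*k+2) * A (2*k+2)) $ M"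
proof -
  let ?f = "\<lambda>m. (fps_X^m * A m) $ M"
  have "ssum (\<lambda>k. fps_X^(2*k+1) * A (2*k+1) + fps_X^(2*k+2) * A (2*k+2)) $ M
      = (\<Sum>k<Suc M. ?f (Suc (2*k)) + ?f (Suc (2*k+1)))"
    by (simp add: ssum_nth lessThan_Suc_atMost)
  also have "\<dots> = (\<Sum>m<2 * Suc M. ?f (Suc m))" by (rule pair_sum)
  also have "\<dots> = (\<Sum>m\<in>{0..<2 * Suc M}. ?f (Suc m))" by (simp add: atLeast0LessThan)
  also have "\<dots> = (\<Sum>m\<in>{Suc 0..<Suc (2 * Suc M)}. ?f m)"
    by (rule sum.shift_bounds_Suc_ivl[symmetric])
  also have "\<dots> = (\<Sum>m\<in>{1..M}. ?f m)"
    by (rule sum.mono_neutral_right) (auto simp: X_ord)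
  finally show ?thesis by simp
qed

lemma QG_even: "even m \<Longrightarrow> Q (\<lambda>p. \<forall>x\<in>#p. odd x) m = {}"
  by (auto simp: Q_def)

lemma QG_odd: "odd m \<Longrightarrow> Q (\<lambda>p. \<forall>x\<in>#p. odd x) m = MS (\<lambda>v. if odd v then UNIV else {0}) m"
  by (auto simp: Q_def MS_alt Suc_le_eq not_in_iff[symmetric])

lemma gfG_odd: "odd m \<Longrightarrow> gf (Q (\<lambda>p. \<forall>x\<in>#p. odd x) m) = ones ^ ((m + 1) div 2)"
proof -
  assume m: "odd m"
  have "gf (Q (\<lambda>p. \<forall>x\<in>#p. odd x) m) = (\<Prod>v\<in>{1..m}. ind (if odd v then UNIV else {0}))"
    using MS_main m by (simp add: QG_odd)
  also have "\<dots> = (\<Prod>v\<in>{1..m}. if odd v then ones else 1)"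
    by (rule prod.cong) (auto simp: ind_UNIV ind_0)
  also have "\<dots> = ones ^ ((m + 1) div 2)" by (rule PO)
  finally show ?thesis .
qed


lemma div_eq: "(D::rat fps) $ 0 \<noteq> 0 \<Longrightarrow> S * D = N \<Longrightarrow> S = N / D"
proof -
  assume D: "D $ 0 \<noteq> 0" and SD: "S * D = N"
  have "N / D = N * inverse D" by (rule fps_divide_unit[OF D])
  also have "\<dots> = S * (D * inverse D)" by (simp add: SD[symmetric] mult.assoc)
  also have "D * inverse D = 1" using D by (rule inverse_mult_eq_1')
  finally show ?thesis by simp
qed

lemma D0: "((1 - fps_X - fps_X^2)^2 :: rat fps) $ 0 \<noteq> 0"
  by (simp add: power2_eq_square fps_mult_nth)

lemma gf_empty: "gf {} = 0" by (simp add: gf_def cnt_def fps_eq_iff)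

definition uu :: "rat fps" where "uu = fps_X^2 * ones"

lemma uu0: "uu $ 0 = 0" by (simp add: uu_def)

lemma g_coeff: "(of_nat (g M) :: rat) =
   (\<Sum>m\<in>{1..M}. (fps_X^m * (gf (Q (\<lambda>p. \<forall>x\<in>#p. odd x) m) + fps_X * fps_deriv (gf (Q (\<lambda>p. \<forall>x\<in>#p. odd x) m)))) $ M)"
  unfolding g_def G_set_def by (rule coeff_size)

lemma g_W: "fps_X^(2*k+1) * (gf (Q (\<lambda>p. \<forall>x\<in>#p. odd x) (2*k+1)) + fps_X * fps_deriv (gf (Q (\<lambda>p. \<forall>x\<in>#p. odd x) (2*k+1))))
   + fps_X^(2*k+2) * (gf (Q (\<lambda>p. \<forall>x\<in>#p. odd x) (2*k+2)) + fps_X * fps_deriv (gf (Q (\<lambda>p. \<forall>x\<in>#p. odd x) (2*k+2))))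
   = uu^k * (fps_X * ones) + of_nat (Suc k) * (uu^k * (uu * ones))"
proof -
  have e1: "gf (Q (\<lambda>p. \<forall>x\<in>#p. odd x) (2*k+1)) = ones^(Suc k)"
    by (subst gfG_odd) auto
  have e2: "gf (Q (\<lambda>p. \<forall>x\<in>#p. odd x) (2*k+2)) = 0"
    by (subst QG_even) (auto simp: gf_empty)
  have d: "fps_deriv (ones^Suc k) = of_nat (Suc k) * ones^2 * ones^k"
    by (subst fps_deriv_power') (simp add: ones_deriv)
  have x1: "fps_X^(2*k+1) = (fps_X^2)^k * (fps_X::rat fps)" by (simp add: power_mult power_add)
  have x2: "fps_X^(2*k+2) = (fps_X^2)^k * (fps_X^2::rat fps)" by (simp add: power_mult power_add power2_eq_square)
  show ?thesis unfolding e1 e2 d fps_deriv_0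
    unfolding uu_def power_mult_distrib x1 x2 power_Suc of_nat_Suc
    by algebra
qed

theorem g_gf: "Abs_fps (\<lambda>M. of_nat (g M) :: rat) = (fps_X - fps_X ^ 3) / (1 - fps_X - fps_X ^ 2) ^ 2"
proof (rule div_eq[OF D0])
  let ?G1 = "ssum (\<lambda>k. uu^k * (fps_X * ones))"
  let ?G3 = "ssum (\<lambda>k. of_nat (Suc k) * (uu^k * (uu * ones)))"
  have "Abs_fps (\<lambda>M. of_nat (g M) :: rat) = ?G1 + ?G3"
    unfolding ssum_add[symmetric]
    by (rule fps_ext) (simp only: fps_nth_Abs_fps g_coeff pair2 g_W)
  moreover have "?G1 * (1 - uu) = fps_X * ones" by (rule ssum_geo[OF uu0])
  moreover have "?G3 * (1 - uu)^2 = uu * ones" by (rule ssum_geo2[OF uu0])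
  ultimately show "Abs_fps (\<lambda>M. of_nat (g M) :: rat) * (1 - fps_X - fps_X ^ 2) ^ 2 = fps_X - fps_X ^ 3"
    using ones_inv uu_def by algebra
qed


lemma QH: "0 < m \<Longrightarrow> Q (\<lambda>p. \<forall>x\<in>#p. count p x = 1) m = MS (\<lambda>v. if v = m then {0} else {0,1}) m"
proof (intro set_eqI iffI)
  assume m0: "0 < m"
  fix q assume "q \<in> Q (\<lambda>p. \<forall>x\<in>#p. count p x = 1) m"
  then have s: "\<forall>v\<in>#q. 0 < v \<and> v \<le> m" and c: "\<forall>x\<in>#add_mset m q. count (add_mset m q) x = 1"
    by (auto simp: Q_def)
  have "\<forall>v\<in>{1..m}. count q v \<in> (if v = m then {0} else {0,1})"
  proof
    fix v assume "v \<in> {1..m}"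
    show "count q v \<in> (if v = m then {0} else {0,1})"
    proof (cases "v = m")
      case True
      then show ?thesis using c by auto
    next
      case False
      show ?thesis
      proof (cases "v \<in># q")
        case True
        then have "count (add_mset m q) v = 1" using c by auto
        then show ?thesis using False by auto
      next
        case False
        then show ?thesis by (simp add: not_in_iff)
      qed
    qed
  qed
  then show "q \<in> MS (\<lambda>v. if v = m then {0} else {0,1}) m"
    using s by (auto simp: MS_alt Suc_le_eq)
next
  assume m0: "0 < m"
  fix q assume "q \<in> MS (\<lambda>v. if v = m then {0} else {0,1}) m"
  then have s: "\<forall>v\<in>#q. 1 \<le> v \<and> v \<le> m" and c: "\<forall>v\<in>{1..m}. count q v \<in> (if v = m then {0} else {0,1})"
    by (auto simp: MS_alt)
  have "\<forall>x\<in>#add_mset m q. count (add_mset m q) x = 1"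
  proof
    fix x assume x: "x \<in># add_mset m q"
    show "count (add_mset m q) x = 1"
    proof (cases "x = m")
      case True
      have "m \<noteq> 0" using m0 by simp
      then have "count q m = 0" using c[rule_format, of m] m0 by simp
      then show ?thesis using True by simp
    next
      case False
      then have "x \<in># q" using x by simp
      then have "x \<in> {1..m}" using s by auto
      then have "count q x \<in> {0,1}" using c[rule_format, of x] False by simp
      moreover have "count q x \<noteq> 0" using \<open>x \<in># q\<close> by simp
      ultimately show ?thesis using False by auto
    qed
  qed
  then show "q \<in> Q (\<lambda>p. \<forall>x\<in>#p. count p x = 1) m"
    using s by (auto simp: Q_def)
qed

lemma gfH: "gf (Q (\<lambda>p. \<forall>x\<in>#p. count p x = 1) (Suc n)) = (1 + fps_X)^n"
proof -
  have "gf (Q (\<lambda>p. \<forall>x\<in>#p. count p x = 1) (Suc n))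
      = (\<Prod>v\<in>{1..Suc n}. ind (if v = Suc n then {0} else {0,1}))"
    unfolding QH[OF zero_less_Suc] by (rule MS_main[THEN conjunct2])
  also have "\<dots> = ind {0} * (\<Prod>v\<in>{1..n}. ind (if v = Suc n then {0} else {0,1}))"
    by (simp add: prod.nat_ivl_Suc')
  also have "(\<Prod>v\<in>{1..n}. ind (if v = Suc n then {0} else {0,1})) = (\<Prod>v\<in>{1..n}. 1 + fps_X)"
    by (rule prod.cong) (auto simp: ind_01[simplified])
  finally show ?thesis by (simp add: ind_0)
qed

definition RR :: "rat fps" where "RR = 1 + fps_X"
definition Ri :: "rat fps" where "Ri = inverse RR"
definition uh :: "rat fps" where "uh = fps_X * RR"

lemma RRi: "RR * Ri = 1"
  unfolding Ri_def by (rule inverse_mult_eq_1') (simp add: RR_def)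

lemma uh0: "uh $ 0 = 0" by (simp add: uh_def)

lemma h_coeff: "(of_nat (h M) :: rat) =
   (\<Sum>m\<in>{1..M}. (fps_X^m * (gf (Q (\<lambda>p. \<forall>x\<in>#p. count p x = 1) m) + fps_X * fps_deriv (gf (Q (\<lambda>p. \<forall>x\<in>#p. count p x = 1) m)))) $ M)"
  unfolding h_def H_set_def by (rule coeff_size)

lemma Rj: "of_nat j * RR^(j - 1) = of_nat j * RR^j * Ri"
proof (cases j)
  case (Suc i)
  have "RR^(j-1) = RR^i * (RR * Ri)" using RRi Suc by simp
  then show ?thesis by (simp add: Suc mult.assoc mult.left_commute)
qed simp

lemma h_W: "fps_X^(Suc j) * (gf (Q (\<lambda>p. \<forall>x\<in>#p. count p x = 1) (Suc j)) + fps_X * fps_deriv (gf (Q (\<lambda>p. \<forall>x\<in>#p. count p x = 1) (Suc j))))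
   = uh^j * (fps_X - fps_X^2 * Ri) + of_nat (Suc j) * (uh^j * (fps_X^2 * Ri))"
proof -
  have "fps_deriv (RR^j) = of_nat j * fps_deriv RR * RR^(j - 1)" by (rule fps_deriv_power')
  also have "\<dots> = of_nat j * RR^(j - 1)" by (simp add: RR_def)
  also have "\<dots> = of_nat j * RR^j * Ri" by (rule Rj)
  finally have d: "fps_deriv (RR^j) = of_nat j * RR^j * Ri" .
  show ?thesis unfolding gfH RR_def[symmetric] d
    unfolding uh_def power_mult_distrib power_Suc of_nat_Suc RR_def[symmetric]
    by algebra
qed

theorem h_gf: "Abs_fps (\<lambda>M. of_nat (h M) :: rat) = (fps_X - fps_X ^ 2) / (1 - fps_X - fps_X ^ 2) ^ 2"
proof (rule div_eq[OF D0])
  let ?G1 = "ssum (\<lambda>j. uh^j * (fps_X - fps_X^2 * Ri))"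
  let ?G3 = "ssum (\<lambda>j. of_nat (Suc j) * (uh^j * (fps_X^2 * Ri)))"
  have "Abs_fps (\<lambda>M. of_nat (h M) :: rat) = ?G1 + ?G3"
    unfolding ssum_add[symmetric]
    by (rule fps_ext) (simp only: fps_nth_Abs_fps h_coeff shift1 h_W)
  moreover have "?G1 * (1 - uh) = fps_X - fps_X^2 * Ri" by (rule ssum_geo[OF uh0])
  moreover have "?G3 * (1 - uh)^2 = fps_X^2 * Ri" by (rule ssum_geo2[OF uh0])
  ultimately show "Abs_fps (\<lambda>M. of_nat (h M) :: rat) * (1 - fps_X - fps_X ^ 2) ^ 2 = fps_X - fps_X ^ 2"
    using RRi uh_def RR_def by algebra
qed


abbreviation PG1 :: "nat multiset \<Rightarrow> bool" where
  "PG1 p \<equiv> card {x \<in> set_mset p. even x} = 1"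

definition FE :: "nat \<Rightarrow> nat \<Rightarrow> nat set" where
  "FE e v = (if odd v then UNIV else if v = e then {c. 1 \<le> c} else {0})"

definition EE :: "nat \<Rightarrow> nat set" where
  "EE m = {e. 0 < e \<and> e \<le> m \<and> even e}"

lemma card_ins1: "finite A \<Longrightarrow> card (insert m A) = 1 \<longleftrightarrow> A \<subseteq> {m}"
  by (auto simp: card_1_singleton_iff)

lemma QG1_even:
  assumes m: "even m" "0 < m"
  shows "Q PG1 m = MS (\<lambda>v. if odd v \<or> v = m then UNIV else {0}) m"
proof (intro set_eqI)
  fix q
  have ev: "{x \<in> set_mset (add_mset m q). even x} = insert m {x \<in> set_mset q. even x}"
    using m by auto
  have S: "(\<forall>v\<in>#q. 0 < v \<and> v \<le> m) = (\<forall>v\<in>#q. 1 \<le> v \<and> v \<le> m)" by auto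
  have "PG1 (add_mset m q) \<longleftrightarrow> {x \<in> set_mset q. even x} \<subseteq> {m}"
    unfolding ev by (rule card_ins1) simp
  moreover have "{x \<in> set_mset q. even x} \<subseteq> {m} \<longleftrightarrow> (\<forall>v\<in>{1..m}. count q v \<in> (if odd v \<or> v = m then UNIV else {0}))"
    if s: "\<forall>v\<in>#q. 0 < v \<and> v \<le> m"
  proof
    assume A: "{x \<in> set_mset q. even x} \<subseteq> {m}"
    show "\<forall>v\<in>{1..m}. count q v \<in> (if odd v \<or> v = m then UNIV else {0})"
    proof
      fix v assume "v \<in> {1..m}"
      show "count q v \<in> (if odd v \<or> v = m then UNIV else {0})"
      proof (cases "odd v \<or> v = m")
        case False
        then have "v \<notin># q" using A by blast
        then have "count q v = 0" by (metis count_eq_zero_iff)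
        then show ?thesis using False by simp
      qed simp
    qed
  next
    assume B: "\<forall>v\<in>{1..m}. count q v \<in> (if odd v \<or> v = m then UNIV else {0})"
    show "{x \<in> set_mset q. even x} \<subseteq> {m}"
    proof
      fix x assume x: "x \<in> {x \<in> set_mset q. even x}"
      then have "x \<in> {1..m}" using s by auto
      then have c: "count q x \<in> (if odd x \<or> x = m then UNIV else {0})" using B by blast
      show "x \<in> {m}"
      proof (rule ccontr)
        assume "x \<notin> {m}"
        then have "count q x = 0" using c x by auto
        then show False using x by (metis count_eq_zero_iff mem_Collect_eq)
      qed
    qed
  qed
  ultimately show "q \<in> Q PG1 m \<longleftrightarrow> q \<in> MS (\<lambda>v. if odd v \<or> v = m then UNIV else {0}) m"
    unfolding Q_def MS_alt mem_Collect_eq S[symmetric] by blast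
qed

lemma QG1_odd:
  assumes m: "odd m"
  shows "Q PG1 m = (\<Union>e\<in>EE m. MS (FE e) m)"
proof (intro set_eqI)
  fix q
  have ev: "{x \<in> set_mset (add_mset m q). even x} = {x \<in> set_mset q. even x}"
    using m by auto
  show "q \<in> Q PG1 m \<longleftrightarrow> q \<in> (\<Union>e\<in>EE m. MS (FE e) m)"
  proof
    assume q: "q \<in> Q PG1 m"
    then have s: "\<forall>v\<in>#q. 0 < v \<and> v \<le> m" and c0: "card {x \<in> set_mset (add_mset m q). even x} = 1"
      unfolding Q_def by blast+
    have c: "card {x \<in> set_mset q. even x} = 1" using c0 unfolding ev .
    then obtain e where e: "{x \<in> set_mset q. even x} = {e}" by (auto simp: card_1_singleton_iff)
    then have eq: "e \<in># q" "even e" by auto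
    then have eE: "e \<in> EE m" using s by (auto simp: EE_def)
    have A: "\<forall>v\<in>#q. 1 \<le> v \<and> v \<le> m" using s by auto
    have B: "\<forall>v\<in>{1..m}. count q v \<in> FE e v"
    proof
      fix v assume v: "v \<in> {1..m}"
      show "count q v \<in> FE e v"
      proof (cases "odd v")
        case False
        show ?thesis
        proof (cases "v = e")
          case True then show ?thesis using eq by (simp add: FE_def Suc_le_eq)
        next
          case ne: False
          have "v \<notin># q" using e ne False by blast
          then have "count q v = 0" by (metis count_eq_zero_iff)
          moreover have "FE e v = {0}" using False ne by (simp add: FE_def)
          ultimately show ?thesis by simp
        qed
      qed (simp add: FE_def)
    qed
    have "q \<in> MS (FE e) m" unfolding MS_alt using A B by blast
    then show "q \<in> (\<Union>e\<in>EE m. MS (FE e) m)" using eE by blast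
  next
    assume "q \<in> (\<Union>e\<in>EE m. MS (FE e) m)"
    then obtain e where eE: "e \<in> EE m" and q: "q \<in> MS (FE e) m" by blast
    then have s: "\<forall>v\<in>#q. 1 \<le> v \<and> v \<le> m" and c: "\<forall>v\<in>{1..m}. count q v \<in> FE e v"
      unfolding MS_alt mem_Collect_eq by blast+
    have e: "0 < e" "e \<le> m" "even e" using eE by (auto simp: EE_def)
    have "e \<in> {1..m}" using e by simp
    then have "count q e \<in> FE e e" using c by blast
    moreover have "FE e e = {c. 1 \<le> c}" using e by (simp add: FE_def)
    ultimately have "1 \<le> count q e" by simp
    then have "e \<in># q" by (metis count_eq_zero_iff not_one_le_zero)
    moreover have "x = e" if "x \<in># q" "even x" for x
    proof (rule ccontr)
      assume "x \<noteq> e"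
      have "x \<in> {1..m}" using s that by auto
      then have "count q x \<in> FE e x" using c by blast
      moreover have "FE e x = {0}" using \<open>x \<noteq> e\<close> that by (simp add: FE_def)
      ultimately have "count q x = 0" by simp
      then show False using that by (metis count_eq_zero_iff)
    qed
    ultimately have "{x \<in> set_mset q. even x} = {e}" using e(3) by blast
    then have "card {x \<in> set_mset (add_mset m q). even x} = 1" unfolding ev by simp
    moreover have "\<forall>v\<in>#q. 0 < v \<and> v \<le> m" using s by auto
    ultimately show "q \<in> Q PG1 m" unfolding Q_def mem_Collect_eq by blast
  qed
qed

lemma gfG1_even: "gf (Q PG1 (2*k+2)) = ones^(k+2)"
proof -
  have m: "even (2*k+2::nat)" "0 < (2*k+2::nat)" by auto
  have "gf (Q PG1 (2*k+2)) = (\<Prod>v\<in>{1..2*k+2}. ind (if odd v \<or> v = 2*k+2 then UNIV else {0}))"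
    unfolding QG1_even[OF m] by (rule MS_main[THEN conjunct2])
  also have "{1..2*k+2} = {1..Suc (2*k+1)}" by simp
  also have "(\<Prod>v\<in>{1..Suc (2*k+1)}. ind (if odd v \<or> v = 2*k+2 then UNIV else {0}))
     = ind (if odd (Suc (2*k+1)) \<or> Suc (2*k+1) = 2*k+2 then UNIV else {0}) * (\<Prod>v\<in>{1..2*k+1}. ind (if odd v \<or> v = 2*k+2 then UNIV else {0}))"
    by (rule prod.nat_ivl_Suc') simp
  also have "(\<Prod>v\<in>{1..2*k+1}. ind (if odd v \<or> v = 2*k+2 then UNIV else {0})) = (\<Prod>v\<in>{1..2*k+1}. if odd v then ones else 1)"
    by (rule prod.cong) (auto simp: ind_UNIV ind_0)
  also have "\<dots> = ones^((2*k+1+1) div 2)" by (rule PO)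
  also have "(2*k+1+1) div 2 = k+1" by simp
  finally show ?thesis by (simp add: ind_UNIV)
qed

lemma gf_FE:
  assumes "e \<in> EE m"
  shows "gf (MS (FE e) m) = fps_X * ones * ones^((m+1) div 2)"
proof -
  have e: "e \<in> {1..m}" "even e" using assms by (auto simp: EE_def)
  let ?f = "\<lambda>v. if odd v then ones else 1"
  have "gf (MS (FE e) m) = (\<Prod>v\<in>{1..m}. ind (FE e v))" by (simp add: MS_main)
  also have "\<dots> = ind (FE e e) * (\<Prod>v\<in>{1..m}-{e}. ind (FE e v))" using e by (simp add: prod.remove)
  also have "(\<Prod>v\<in>{1..m}-{e}. ind (FE e v)) = (\<Prod>v\<in>{1..m}-{e}. ?f v)"
    by (rule prod.cong) (auto simp: FE_def ind_UNIV ind_0)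
  also have "\<dots> = (\<Prod>v\<in>{1..m}. ?f v)" using e by (simp add: prod.remove)
  also have "\<dots> = ones^((m+1) div 2)" by (rule PO)
  also have "ind (FE e e) = fps_X * ones"
  proof -
    have fe: "FE e e = {c. 1 \<le> c}" using e by (simp add: FE_def)
    show ?thesis unfolding fe by (rule ind_ge1)
  qed
  finally show ?thesis .
qed

lemma EE_card: "card (EE (2*k+1)) = k"
proof -
  have "EE (2*k+1) = (\<lambda>i. 2 * Suc i) ` {..<k}"
  proof (intro set_eqI iffI)
    fix e assume "e \<in> EE (2*k+1)"
    then obtain j where j: "e = 2*j" "0 < j" "j \<le> k" by (auto simp: EE_def elim!: evenE)
    then show "e \<in> (\<lambda>i. 2 * Suc i) ` {..<k}"
      by (intro image_eqI[of _ _ "j - 1"]) auto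
  qed (auto simp: EE_def)
  moreover have "inj_on (\<lambda>i. 2 * Suc i) {..<k}" by (auto simp: inj_on_def)
  ultimately show ?thesis by (simp add: card_image)
qed

lemma odd_2k1: "odd (2*k+1::nat)" by simp

lemma gfG1_odd: "gf (Q PG1 (2*k+1)) = of_nat k * (fps_X * ones * ones^(k+1))"
proof -
  have "gf (Q PG1 (2*k+1)) = (\<Sum>e\<in>EE (2*k+1). gf (MS (FE e) (2*k+1)))"
    unfolding QG1_odd[of "2*k+1", OF odd_2k1]
  proof (rule gf_UN)
    show "finite (EE (2*k+1))" by (simp add: EE_def)
    show "\<And>i n. finite {q \<in> MS (FE i) (2*k+1). size q = n}" using MS_main by blast
    fix i j assume ij: "i \<in> EE (2*k+1)" "j \<in> EE (2*k+1)" "i \<noteq> j"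
    show "MS (FE i) (2*k+1) \<inter> MS (FE j) (2*k+1) = {}"
    proof (rule ccontr)
      assume "MS (FE i) (2*k+1) \<inter> MS (FE j) (2*k+1) \<noteq> {}"
      then obtain q where "q \<in> MS (FE i) (2*k+1)" "q \<in> MS (FE j) (2*k+1)" by blast
      moreover have "i \<in> {1..2*k+1}" "even i" using ij by (auto simp: EE_def)
      ultimately have "count q i \<in> FE i i" "count q i \<in> FE j i" by (auto simp: MS_alt)
      moreover have "FE i i = {c. 1 \<le> c}" "FE j i = {0}" using \<open>even i\<close> ij(3) by (auto simp: FE_def)
      ultimately show False by (metis mem_Collect_eq singletonD not_one_le_zero)
    qed
  qed
  also have "\<dots> = (\<Sum>e\<in>EE (2*k+1). fps_X * ones * ones^(k+1))"
    by (rule sum.cong) (auto simp: gf_FE)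
  also have "\<dots> = of_nat k * (fps_X * ones * ones^(k+1))" unfolding sum_constant EE_card by (rule refl)
  finally show ?thesis .
qed

lemma g1_coeff: "(of_nat (g1 M) :: rat) = (\<Sum>m\<in>{1..M}. (fps_X^m * gf (Q PG1 m)) $ M)"
  unfolding g1_def G1_set_def by (rule coeff_card)

lemma g1_W: "fps_X^(2*k+1) * gf (Q PG1 (2*k+1)) + fps_X^(2*k+2) * gf (Q PG1 (2*k+2))
   = of_nat (Suc k) * (uu^k * (uu * ones))"
proof -
  have x1: "fps_X^(2*k+1) = (fps_X^2)^k * (fps_X::rat fps)" by (simp add: power_mult power_add)
  have x2: "fps_X^(2*k+2) = (fps_X^2)^k * (fps_X^2::rat fps)" by (simp add: power_mult power_add power2_eq_square)
  show ?thesis unfolding gfG1_odd gfG1_even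
    unfolding x1 x2
    unfolding uu_def power_mult_distrib power_add power_one_right of_nat_Suc
    by (simp add: algebra_simps power2_eq_square)
qed

theorem g1_gf: "Abs_fps (\<lambda>M. of_nat (g1 M) :: rat) = fps_X ^ 2 / (1 - fps_X - fps_X ^ 2) ^ 2"
proof (rule div_eq[OF D0])
  let ?G3 = "ssum (\<lambda>k. of_nat (Suc k) * (uu^k * (uu * ones)))"
  have S: "Abs_fps (\<lambda>M. of_nat (g1 M) :: rat) = ?G3"
    by (rule fps_ext) (simp only: fps_nth_Abs_fps g1_coeff pair2 g1_W)
  have G: "?G3 * (1 - uu)^2 = uu * ones" by (rule ssum_geo2[OF uu0])
  have Deq: "(1 - uu) * (1 - fps_X) = (1 - fps_X - fps_X ^ 2 :: rat fps)"
  proof -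
    have "(1 - uu) * (1 - fps_X) = (1 - fps_X) - fps_X^2 * (ones * (1 - fps_X))"
      by (simp add: uu_def algebra_simps)
    then show ?thesis by (simp add: ones_inv)
  qed
  have U: "uu * ones * (1 - fps_X)^2 = fps_X^2"
  proof -
    have "uu * ones * (1 - fps_X)^2 = fps_X^2 * (ones * (1 - fps_X))^2"
      by (simp add: uu_def power2_eq_square mult_ac)
    then show ?thesis by (simp add: ones_inv)
  qed
  have "Abs_fps (\<lambda>M. of_nat (g1 M) :: rat) * (1 - fps_X - fps_X ^ 2) ^ 2
      = (?G3 * (1 - uu)^2) * (1 - fps_X)^2"
    unfolding S Deq[symmetric] by (simp only: power_mult_distrib mult.assoc)
  also have "\<dots> = fps_X^2" unfolding G by (rule U)
  finally show "Abs_fps (\<lambda>M. of_nat (g1 M) :: rat) * (1 - fps_X - fps_X ^ 2) ^ 2 = fps_X ^ 2" .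
qed


abbreviation PH1 :: "nat multiset \<Rightarrow> bool" where
  "PH1 p \<equiv> card {x \<in> set_mset p. 2 \<le> count p x} = 1"

definition FH :: "nat \<Rightarrow> nat \<Rightarrow> nat \<Rightarrow> nat set" where
  "FH r m v = (if v = r then (if r = m then {c. 1 \<le> c} else {c. 2 \<le> c})
               else if v = m then {0} else {0,1})"

lemma cnt_pos: "1 \<le> count q x \<Longrightarrow> x \<in># q"
  by (metis count_eq_zero_iff not_one_le_zero)

lemma QH1:
  assumes m0: "0 < m"
  shows "Q PH1 m = (\<Union>r\<in>{1..m}. MS (FH r m) m)"
proof (intro set_eqI)
  fix q
  let ?p = "add_mset m q"
  have cp: "\<And>v. count ?p v = count q v + (if v = m then 1 else 0)" by simp
  have Rd: "{x \<in> set_mset ?p. 2 \<le> count ?p x} = {x. 2 \<le> count ?p x}"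
  proof (rule Collect_cong)
    fix x
    show "(x \<in># ?p \<and> 2 \<le> count ?p x) = (2 \<le> count ?p x)"
      using cnt_pos[of ?p x] by linarith
  qed
  show "q \<in> Q PH1 m \<longleftrightarrow> q \<in> (\<Union>r\<in>{1..m}. MS (FH r m) m)"
  proof
    assume q: "q \<in> Q PH1 m"
    then have s: "\<forall>v\<in>#q. 0 < v \<and> v \<le> m" and c0: "card {x \<in> set_mset ?p. 2 \<le> count ?p x} = 1"
      unfolding Q_def by blast+
    then obtain r where r: "{x. 2 \<le> count ?p x} = {r}" unfolding Rd by (auto simp: card_1_singleton_iff)
    then have r2: "2 \<le> count ?p r" by blast
    have oth: "count ?p v \<le> 1" if "v \<noteq> r" for v
    proof -
      have "v \<notin> {x. 2 \<le> count ?p x}" using r that by blast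
      then show ?thesis by simp
    qed
    have rm: "r \<in> {1..m}"
    proof (cases "r = m")
      case False
      then have "2 \<le> count q r" using r2 by simp
      then have "r \<in># q" using cnt_pos[of q r] by linarith
      then show ?thesis using s by auto
    qed (use m0 in auto)
    have A: "\<forall>v\<in>#q. 1 \<le> v \<and> v \<le> m" using s by auto
    have B: "\<forall>v\<in>{1..m}. count q v \<in> FH r m v"
    proof
      fix v assume v: "v \<in> {1..m}"
      show "count q v \<in> FH r m v"
      proof (cases "v = r")
        case True
        then show ?thesis using r2 by (cases "r = m") (auto simp: FH_def)
      next
        case False
        then have "count ?p v \<le> 1" by (rule oth)
        then show ?thesis using False by (cases "v = m") (auto simp: FH_def)
      qed
    qed
    have "q \<in> MS (FH r m) m" unfolding MS_alt using A B by blast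
    then show "q \<in> (\<Union>r\<in>{1..m}. MS (FH r m) m)" using rm by blast
  next
    assume "q \<in> (\<Union>r\<in>{1..m}. MS (FH r m) m)"
    then obtain r where rm: "r \<in> {1..m}" and q: "q \<in> MS (FH r m) m" by blast
    then have s: "\<forall>v\<in>#q. 1 \<le> v \<and> v \<le> m" and c: "\<forall>v\<in>{1..m}. count q v \<in> FH r m v"
      unfolding MS_alt mem_Collect_eq by blast+
    have r2: "2 \<le> count ?p r"
    proof -
      have "count q r \<in> FH r m r" using c rm by blast
      then show ?thesis by (cases "r = m") (auto simp: FH_def)
    qed
    have oth: "\<not> 2 \<le> count ?p x" if "x \<noteq> r" for x
    proof (cases "x \<in> {1..m}")
      case True
      then have "count q x \<in> FH r m x" using c by blast
      then show ?thesis using that by (cases "x = m") (auto simp: FH_def)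
    next
      case False
      then have "x \<notin># q" using s by auto
      then have "count q x = 0" by (metis count_eq_zero_iff)
      moreover have "x \<noteq> m" using False m0 by auto
      ultimately show ?thesis by simp
    qed
    have "{x. 2 \<le> count ?p x} = {r}" using r2 oth by blast
    then have "card {x \<in> set_mset ?p. 2 \<le> count ?p x} = 1" unfolding Rd by simp
    moreover have "\<forall>v\<in>#q. 0 < v \<and> v \<le> m" using s by auto
    ultimately show "q \<in> Q PH1 m" unfolding Q_def mem_Collect_eq by blast
  qed
qed

lemma gf_FH_top: "gf (MS (FH (Suc n) (Suc n)) (Suc n)) = fps_X * ones * RR^n"
proof -
  have "gf (MS (FH (Suc n) (Suc n)) (Suc n)) = (\<Prod>v\<in>{1..Suc n}. ind (FH (Suc n) (Suc n) v))"
    by (rule MS_main[THEN conjunct2])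
  also have "\<dots> = ind (FH (Suc n) (Suc n) (Suc n)) * (\<Prod>v\<in>{1..n}. ind (FH (Suc n) (Suc n) v))"
    by (rule prod.nat_ivl_Suc') simp
  also have "(\<Prod>v\<in>{1..n}. ind (FH (Suc n) (Suc n) v)) = (\<Prod>v\<in>{1..n}. RR)"
    by (rule prod.cong) (auto simp: FH_def ind_01[simplified] RR_def)
  also have "ind (FH (Suc n) (Suc n) (Suc n)) = fps_X * ones"
  proof -
    have "FH (Suc n) (Suc n) (Suc n) = {c. 1 \<le> c}" by (simp add: FH_def)
    then show ?thesis by (simp only: ind_ge1)
  qed
  finally show ?thesis by simp
qed

lemma gf_FH_low:
  assumes r: "r \<in> {1..n}"
  shows "gf (MS (FH r (Suc n)) (Suc n)) = fps_X^2 * ones * RR^(n - 1)"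
proof -
  have "gf (MS (FH r (Suc n)) (Suc n)) = (\<Prod>v\<in>{1..Suc n}. ind (FH r (Suc n) v))"
    by (rule MS_main[THEN conjunct2])
  also have "\<dots> = ind (FH r (Suc n) (Suc n)) * (\<Prod>v\<in>{1..n}. ind (FH r (Suc n) v))"
    by (rule prod.nat_ivl_Suc') simp
  also have "ind (FH r (Suc n) (Suc n)) = 1"
  proof -
    have "FH r (Suc n) (Suc n) = {0}" using r by (auto simp: FH_def)
    then show ?thesis by (simp only: ind_0)
  qed
  also have "(\<Prod>v\<in>{1..n}. ind (FH r (Suc n) v)) = ind (FH r (Suc n) r) * (\<Prod>v\<in>{1..n}-{r}. ind (FH r (Suc n) v))"
    using r by (simp add: prod.remove)
  also have "ind (FH r (Suc n) r) = fps_X^2 * ones"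
  proof -
    have "FH r (Suc n) r = {c. 2 \<le> c}" using r by (auto simp: FH_def)
    then show ?thesis by (simp only: ind_ge2)
  qed
  also have "(\<Prod>v\<in>{1..n}-{r}. ind (FH r (Suc n) v)) = (\<Prod>v\<in>{1..n}-{r}. RR)"
    by (rule prod.cong) (auto simp: FH_def ind_01[simplified] RR_def)
  also have "\<dots> = RR^(n - 1)" using r by simp
  finally show ?thesis by simp
qed

lemma gfH1: "gf (Q PH1 (Suc n)) = fps_X * ones * RR^n + of_nat n * (fps_X^2 * ones * RR^n * Ri)"
proof -
  have "gf (Q PH1 (Suc n)) = (\<Sum>r\<in>{1..Suc n}. gf (MS (FH r (Suc n)) (Suc n)))"
    unfolding QH1[OF zero_less_Suc]
  proof (rule gf_UN)
    show "finite {1..Suc n}" by simp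
    show "\<And>i k. finite {q \<in> MS (FH i (Suc n)) (Suc n). size q = k}" using MS_main by blast
    fix i j assume ij: "i \<in> {1..Suc n}" "j \<in> {1..Suc n}" "i \<noteq> j"
    show "MS (FH i (Suc n)) (Suc n) \<inter> MS (FH j (Suc n)) (Suc n) = {}"
    proof (rule ccontr)
      assume "MS (FH i (Suc n)) (Suc n) \<inter> MS (FH j (Suc n)) (Suc n) \<noteq> {}"
      then obtain q where "q \<in> MS (FH i (Suc n)) (Suc n)" "q \<in> MS (FH j (Suc n)) (Suc n)" by blast
      then have "count q i \<in> FH i (Suc n) i" "count q i \<in> FH j (Suc n) i"
        using ij(1) unfolding MS_alt by blast+
      note cc = this
      show False
      proof (cases "i = Suc n")
        case True
        have "FH i (Suc n) i = {c. 1 \<le> c}" "FH j (Suc n) i = {0}" using True ij(3) by (auto simp: FH_def)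
        then show False using cc by (metis mem_Collect_eq singletonD not_one_le_zero)
      next
        case False
        have "FH i (Suc n) i = {c. 2 \<le> c}" "FH j (Suc n) i = {0,1}" using False ij(3) by (auto simp: FH_def)
        then show False using cc by auto
      qed
    qed
  qed
  also have "\<dots> = gf (MS (FH (Suc n) (Suc n)) (Suc n)) + (\<Sum>r\<in>{1..n}. gf (MS (FH r (Suc n)) (Suc n)))"
    by (subst sum.nat_ivl_Suc') simp_all
  also have "(\<Sum>r\<in>{1..n}. gf (MS (FH r (Suc n)) (Suc n))) = (\<Sum>r\<in>{1..n}. fps_X^2 * ones * RR^(n - 1))"
    by (rule sum.cong) (auto simp: gf_FH_low)
  also have "\<dots> = of_nat n * (fps_X^2 * ones * RR^(n - 1))" by simp
  also have "\<dots> = fps_X^2 * ones * (of_nat n * RR^(n - 1))" by (simp add: mult_ac)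
  also have "\<dots> = of_nat n * (fps_X^2 * ones * RR^n * Ri)" unfolding Rj by (simp add: mult_ac)
  finally show ?thesis by (simp add: gf_FH_top)
qed

lemma h1_coeff: "(of_nat (h1 M) :: rat) = (\<Sum>m\<in>{1..M}. (fps_X^m * gf (Q PH1 m)) $ M)"
  unfolding h1_def H1_set_def by (rule coeff_card)

lemma h1_W: "fps_X^(Suc j) * gf (Q PH1 (Suc j))
   = uh^j * (fps_X^2 * ones - fps_X^3 * ones * Ri) + of_nat (Suc j) * (uh^j * (fps_X^3 * ones * Ri))"
  unfolding gfH1 uh_def power_mult_distrib power_Suc of_nat_Suc
  by (simp add: algebra_simps power2_eq_square power3_eq_cube)

lemma poly_h1:
  fixes X Z R Ri u :: "rat fps"
  assumes "R * Ri = 1" "u = X * R" "R = 1 + X" "Z * (1 - X) = 1"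
  shows "(X^2 * Z - X^3 * Z * Ri) * (1 - u) + X^3 * Z * Ri = X^2"
  using assms by algebra

lemma Dh: "(1 - fps_X - fps_X^2 :: rat fps) = 1 - uh"
  by (simp add: uh_def RR_def algebra_simps power2_eq_square)

theorem h1_gf: "Abs_fps (\<lambda>M. of_nat (h1 M) :: rat) = fps_X ^ 2 / (1 - fps_X - fps_X ^ 2) ^ 2"
proof (rule div_eq[OF D0])
  let ?A1 = "fps_X^2 * ones - fps_X^3 * ones * Ri"
  let ?A2 = "fps_X^3 * ones * Ri"
  let ?G1 = "ssum (\<lambda>j. uh^j * ?A1)"
  let ?G3 = "ssum (\<lambda>j. of_nat (Suc j) * (uh^j * ?A2))"
  have S: "Abs_fps (\<lambda>M. of_nat (h1 M) :: rat) = ?G1 + ?G3"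
    unfolding ssum_add[symmetric]
    by (rule fps_ext) (simp only: fps_nth_Abs_fps h1_coeff shift1 h1_W)
  have G1: "?G1 * (1 - uh) = ?A1" by (rule ssum_geo[OF uh0])
  have G3: "?G3 * (1 - uh)^2 = ?A2" by (rule ssum_geo2[OF uh0])
  have "Abs_fps (\<lambda>M. of_nat (h1 M) :: rat) * (1 - fps_X - fps_X ^ 2) ^ 2
      = (?G1 * (1 - uh)) * (1 - uh) + ?G3 * (1 - uh)^2"
    unfolding S Dh by (simp only: distrib_right power2_eq_square mult.assoc)
  also have "\<dots> = ?A1 * (1 - uh) + ?A2" unfolding G1 G3 ..
  also have "\<dots> = fps_X^2" by (rule poly_h1[OF RRi uh_def RR_def ones_inv])
  finally show "Abs_fps (\<lambda>M. of_nat (h1 M) :: rat) * (1 - fps_X - fps_X ^ 2) ^ 2 = fps_X ^ 2" .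
qed


theorem mainTheorem3:
  shows "Abs_fps (\<lambda>M. of_nat (g M) :: rat) = (fps_X - fps_X ^ 3) / (1 - fps_X - fps_X ^ 2) ^ 2
    \<and> Abs_fps (\<lambda>M. of_nat (h M) :: rat) = (fps_X - fps_X ^ 2) / (1 - fps_X - fps_X ^ 2) ^ 2
    \<and> Abs_fps (\<lambda>M. of_nat (g1 M) :: rat) = fps_X ^ 2 / (1 - fps_X - fps_X ^ 2) ^ 2
    \<and> Abs_fps (\<lambda>M. of_nat (h1 M) :: rat) = fps_X ^ 2 / (1 - fps_X - fps_X ^ 2) ^ 2
    \<and> (\<forall>M\<ge>1. g1 M = h1 M)"
proof (intro conjI)
  show "\<forall>M\<ge>1. g1 M = h1 M"
  proof (intro allI impI)
    fix M :: nat
    have "Abs_fps (\<lambda>M. of_nat (g1 M) :: rat) = Abs_fps (\<lambda>M. of_nat (h1 M) :: rat)"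
      using g1_gf h1_gf by simp
    then have "(of_nat (g1 M) :: rat) = of_nat (h1 M)"
      by (metis fps_nth_Abs_fps)
    then show "g1 M = h1 M" by simp
  qed
qed (fact g_gf h_gf g1_gf h1_gf)+

end
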